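(* Let $\mathcal{G}=\langle V,E,T\rangle$ be an OMVPP $k$-grabbing pawn game and let $c$ be an initial configuration from which Player 1 wins. Then Player 1 has a strategy such that, for every Player 2 strategy, the resulting play reaches a vertex of $T$ within $|V|\cdot(k+1)$ rounds.
   Context: A pawn game with $d$ pawns consists of a finite directed graph $(V,E)$, a target set $T\subseteq V$, and sets $V_1,\dots,V_d\subseteq V$ with $V_1\cup\dots\cup V_d=V$ (possibly overlapping: OMVPP), where Pawn $j$ owns $V_j$. Player 1 moves the token from $v$ (along an edge) iff he controls at least one pawn owning $v$; otherwise Player 2 moves. In the $k$-grabbing mechanism, configurations are $\langle v,P,r\rangle$ with $v$ the token position, $P\subseteq[d]$ the pawns controlled by Player 1, and $r\in\{0,\dots,k\}$ the number of remaining grabs; initially $r=k$. A round consists of one move of the token followed by Player 1's option to grab: either do nothing or, if $r>0$, take a pawn $j\notin P$, moving to $P\cup\{j\}$ and $r-1$; grabbed pawns stay with Player 1 forever and Player 2 never grabs. Player 1 wins a play iff it visits $T$; Player 1 wins from a configuration if he has a strategy winning against all Player 2 strategies. *)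

theory Defs
  imports Main
begin

text \<open>Configurations: token position, set of pawns controlled by Player 1, remaining grabs.\<close>
type_synonym 'v config = "'v \<times> nat set \<times> nat"

text \<open>An OMVPP pawn game with pawns 1..d; Own j is the set of vertices owned by pawn j
 (owner sets may overlap).  As usual for such games, every vertex has a successor.\<close>
definition pawn_game :: "'v set \<Rightarrow> ('v \<times> 'v) set \<Rightarrow> 'v set \<Rightarrow> nat \<Rightarrow> (nat \<Rightarrow> 'v set) \<Rightarrow> bool" where
  "pawn_game V E T d Own \<longleftrightarrow> finite V \<and> E \<subseteq> V \<times> V \<and> T \<subseteq> V
     \<and> (\<forall>v\<in>V. \<exists>u. (v, u) \<in> E) \<and> (\<Union>j\<in>{1..d}. Own j) = V"

definition p1_moves :: "(nat \<Rightarrow> 'v set) \<Rightarrow> nat set \<Rightarrow> 'v \<Rightarrow> bool" where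
  "p1_moves Own P v \<longleftrightarrow> (\<exists>j\<in>P. v \<in> Own j)"

text \<open>A Player 1 strategy: a move function on histories (lists of round-start
 configurations) and a grab function depending on the history and the new token position.\<close>
type_synonym 'v strat1 = "('v config list \<Rightarrow> 'v) \<times> ('v config list \<Rightarrow> 'v \<Rightarrow> nat option)"
type_synonym 'v strat2 = "'v config list \<Rightarrow> 'v"

definition valid1 :: "('v \<times> 'v) set \<Rightarrow> nat \<Rightarrow> (nat \<Rightarrow> 'v set) \<Rightarrow> 'v strat1 \<Rightarrow> bool" where
  "valid1 E d Own \<sigma> \<longleftrightarrow>
     (\<forall>h v P r. h \<noteq> [] \<longrightarrow> last h = (v, P, r) \<longrightarrow>
        (p1_moves Own P v \<longrightarrow> (v, fst \<sigma> h) \<in> E) \<and>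
        (\<forall>u j. snd \<sigma> h u = Some j \<longrightarrow> r > 0 \<and> j \<in> {1..d} \<and> j \<notin> P))"

definition valid2 :: "('v \<times> 'v) set \<Rightarrow> (nat \<Rightarrow> 'v set) \<Rightarrow> 'v strat2 \<Rightarrow> bool" where
  "valid2 E Own \<tau> \<longleftrightarrow>
     (\<forall>h v P r. h \<noteq> [] \<longrightarrow> last h = (v, P, r) \<longrightarrow>
        (\<not> p1_moves Own P v \<longrightarrow> (v, \<tau> h) \<in> E))"

definition next_config :: "(nat \<Rightarrow> 'v set) \<Rightarrow> 'v strat1 \<Rightarrow> 'v strat2 \<Rightarrow> 'v config list \<Rightarrow> 'v config" where
  "next_config Own \<sigma> \<tau> h =
     (case last h of (v, P, r) \<Rightarrow>
        let u = (if p1_moves Own P v then fst \<sigma> h else \<tau> h) in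
        (case snd \<sigma> h u of None \<Rightarrow> (u, P, r) | Some j \<Rightarrow> (u, insert j P, r - 1)))"

fun hist :: "(nat \<Rightarrow> 'v set) \<Rightarrow> 'v strat1 \<Rightarrow> 'v strat2 \<Rightarrow> 'v config \<Rightarrow> nat \<Rightarrow> 'v config list" where
  "hist Own \<sigma> \<tau> c 0 = [c]"
| "hist Own \<sigma> \<tau> c (Suc n) = (let h = hist Own \<sigma> \<tau> c n in h @ [next_config Own \<sigma> \<tau> h])"

definition play :: "(nat \<Rightarrow> 'v set) \<Rightarrow> 'v strat1 \<Rightarrow> 'v strat2 \<Rightarrow> 'v config \<Rightarrow> nat \<Rightarrow> 'v config" where
  "play Own \<sigma> \<tau> c n = last (hist Own \<sigma> \<tau> c n)"

definition p1_wins :: "('v \<times> 'v) set \<Rightarrow> 'v set \<Rightarrow> nat \<Rightarrow> (nat \<Rightarrow> 'v set) \<Rightarrow> 'v config \<Rightarrow> bool" where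
  "p1_wins E T d Own c \<longleftrightarrow>
     (\<exists>\<sigma>. valid1 E d Own \<sigma> \<and>
        (\<forall>\<tau>. valid2 E Own \<tau> \<longrightarrow> (\<exists>n. fst (play Own \<sigma> \<tau> c n) \<in> T)))"

end

theory Submission
  imports Defs
begin


lemma chain_stab:
  fixes L :: "nat \<Rightarrow> 'a set"
  assumes mono: "\<And>i. L i \<subseteq> L (Suc i)" and sub: "\<And>i. L i \<subseteq> V" and fin: "finite V"
    and prop1: "\<And>i. i \<ge> a \<Longrightarrow> L (Suc i) = L i \<Longrightarrow> L (Suc (Suc i)) = L (Suc i)"
  shows "L (a + card V + m) = L (a + card V)"
proof -
  have stepeq: "L (Suc (i + m)) = L (i + m)" if "i \<ge> a" "L (Suc i) = L i" for i m
  proof (induction m)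
    case 0 then show ?case using that by simp
  next
    case (Suc m)
    then show ?case using prop1[of "i + m"] that by simp
  qed
  have propL: "L (i + m) = L i" if "i \<ge> a" "L (Suc i) = L i" for i m
    by (induction m) (use stepeq[OF that] in auto)
  have fins: "finite (L i)" for i using finite_subset[OF sub fin] .
  have cnt: "L (a + j) = L (a + Suc j) \<or> j \<le> card (L (a + j))" for j
  proof (induction j)
    case 0 then show ?case by simp
  next
    case (Suc j)
    show ?case
    proof (cases "L (a + j) = L (a + Suc j)")
      case True
      then have "L (a + j + 2) = L (a + j)" using propL[of "a+j" 2] by simp
      then show ?thesis using True by simp
    next
      case False
      then have "L (a + j) \<subset> L (a + Suc j)" using mono[of "a+j"] by auto
      then have "card (L (a + j)) < card (L (a + Suc j))" using fins psubset_card_mono by blast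
      then show ?thesis using Suc False by simp
    qed
  qed
  have eq: "L (Suc (a + card V)) = L (a + card V)"
  proof (rule ccontr)
    assume ne: "L (Suc (a + card V)) \<noteq> L (a + card V)"
    then have "card V \<le> card (L (a + card V))" using cnt[of "card V"] by auto
    moreover have "L (a + card V) \<subset> L (Suc (a + card V))" using mono ne by auto
    then have "card (L (a + card V)) < card (L (Suc (a + card V)))" using fins psubset_card_mono by blast
    moreover have "card (L (Suc (a + card V))) \<le> card V" using card_mono[OF fin sub] .
    ultimately show False by simp
  qed
  show ?thesis using propL[of "a + card V" m] eq by simp
qed



locale pg =
  fixes V :: "'v set" and E :: "('v \<times> 'v) set" and T :: "'v set"
    and d :: nat and Own :: "nat \<Rightarrow> 'v set"
  assumes pgame: "pawn_game V E T d Own"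
begin

lemma finV: "finite V" and EV: "E \<subseteq> V \<times> V" and TV: "T \<subseteq> V"
  using pgame by (auto simp: pawn_game_def)

definition good :: "'v config set \<Rightarrow> 'v \<Rightarrow> nat set \<Rightarrow> nat \<Rightarrow> bool" where
  "good S u P r \<longleftrightarrow> (u, P, r) \<in> S \<or> (\<exists>j. 0 < r \<and> j \<in> {1..d} \<and> j \<notin> P \<and> (u, insert j P, r - 1) \<in> S)"

definition stepc :: "'v config set \<Rightarrow> 'v \<Rightarrow> nat set \<Rightarrow> nat \<Rightarrow> bool" where
  "stepc S v P r \<longleftrightarrow> v \<in> V \<and> (if p1_moves Own P v then \<exists>u. (v, u) \<in> E \<and> good S u P r
      else \<forall>u. (v, u) \<in> E \<longrightarrow> good S u P r)"

fun attr :: "nat \<Rightarrow> 'v config set" where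
  "attr 0 = {c. fst c \<in> T}"
| "attr (Suc i) = attr i \<union> {(v, P, r). stepc (attr i) v P r}"

definition W :: "'v config set" where "W = (\<Union>i. attr i)"

lemma attr_Suc_mono: "attr i \<subseteq> attr (Suc i)" by auto

lemma attr_mono: "i \<le> j \<Longrightarrow> attr i \<subseteq> attr j"
  using lift_Suc_mono_le[of attr, OF attr_Suc_mono] by blast

lemma attr_V: "c \<in> attr i \<Longrightarrow> fst c \<in> V"
  by (induction i arbitrary: c) (use TV in \<open>auto simp: stepc_def\<close>)

lemma stepc_cong: "(\<And>u. good S u P r = good S' u P r) \<Longrightarrow> stepc S v P r = stepc S' v P r"
  by (simp add: stepc_def)

lemma stab_step:
  assumes IH: "\<And>P v i. 0 < r \<Longrightarrow> (v, P, r - 1) \<in> attr i \<Longrightarrow> (v, P, r - 1) \<in> attr (card V * r)"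
  shows "(v, P, r) \<in> attr i \<Longrightarrow> (v, P, r) \<in> attr (card V * Suc r)"
proof -
  define a where "a = card V * r"
  define L where "L i = {v. (v, P, r) \<in> attr i}" for i
  have Lmono: "L i \<subseteq> L (Suc i)" for i unfolding L_def by auto
  have Lsub: "L i \<subseteq> V" for i unfolding L_def using attr_V by force
  have p1: "L (Suc (Suc i)) = L (Suc i)" if "i \<ge> a" "L (Suc i) = L i" for i
  proof -
    have g: "good (attr (Suc i)) u P r = good (attr i) u P r" for u
    proof -
      have "(u, P, r) \<in> attr (Suc i) \<longleftrightarrow> (u, P, r) \<in> attr i"
        using that(2) unfolding L_def by blast
      moreover have "(u, P', r - 1) \<in> attr (Suc i) \<longleftrightarrow> (u, P', r - 1) \<in> attr i" if "0 < r" for P'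
      proof
        assume "(u, P', r - 1) \<in> attr (Suc i)"
        then have "(u, P', r - 1) \<in> attr a" using IH \<open>0 < r\<close> a_def by blast
        then show "(u, P', r - 1) \<in> attr i" using attr_mono \<open>i \<ge> a\<close> by blast
      qed (use attr_Suc_mono in blast)
      ultimately show ?thesis unfolding good_def by blast
    qed
    have "stepc (attr (Suc i)) v' P r = stepc (attr i) v' P r" for v'
      by (rule stepc_cong) (rule g)
    then show ?thesis unfolding L_def by auto
  qed
  have st: "L (a + card V + m) = L (a + card V)" for m
    using chain_stab[of L V a, OF Lmono Lsub finV p1] by blast
  assume "(v, P, r) \<in> attr i"
  then have vi: "v \<in> L i" unfolding L_def by simp
  have N: "a + card V = card V * Suc r" unfolding a_def by simp
  show "(v, P, r) \<in> attr (card V * Suc r)"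
  proof (cases "i \<le> a + card V")
    case True
    then show ?thesis using attr_mono vi L_def N by auto
  next
    case False
    then have "i = a + card V + (i - (a + card V))" by simp
    then have "v \<in> L (a + card V)" using vi st by metis
    then show ?thesis using N L_def by simp
  qed
qed

lemma stab: "(v, P, r) \<in> attr i \<Longrightarrow> (v, P, r) \<in> attr (card V * Suc r)"
proof (induction r arbitrary: v P i)
  case 0
  show ?case by (rule stab_step[OF _ 0]) simp
next
  case (Suc r)
  show ?case by (rule stab_step[OF _ Suc.prems]) (use Suc.IH in simp)
qed

lemma stabW: "(v, P, r) \<in> W \<Longrightarrow> (v, P, r) \<in> attr (card V * Suc r)"
  unfolding W_def using stab by blast

end


context pg
begin

definition rank :: "'v config \<Rightarrow> nat" where "rank c = (LEAST i. c \<in> attr i)"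

definition Aof :: "'v config list \<Rightarrow> 'v config set" where
  "Aof h = attr (rank (last h) - 1)"

definition mv :: "'v strat1 \<Rightarrow> 'v config list \<Rightarrow> 'v" where
  "mv \<sigma>0 h = (case last h of (v, P, r) \<Rightarrow>
     if p1_moves Own P v \<and> (\<exists>u. (v, u) \<in> E \<and> good (Aof h) u P r)
     then (SOME u. (v, u) \<in> E \<and> good (Aof h) u P r) else fst \<sigma>0 h)"

definition gr :: "'v strat1 \<Rightarrow> 'v config list \<Rightarrow> 'v \<Rightarrow> nat option" where
  "gr \<sigma>0 h u = (case last h of (v, P, r) \<Rightarrow>
     if (u, P, r) \<in> Aof h then None
     else if (\<exists>j. 0 < r \<and> j \<in> {1..d} \<and> j \<notin> P \<and> (u, insert j P, r - 1) \<in> Aof h)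
     then Some (SOME j. 0 < r \<and> j \<in> {1..d} \<and> j \<notin> P \<and> (u, insert j P, r - 1) \<in> Aof h)
     else snd \<sigma>0 h u)"

lemma valid_new:
  assumes "valid1 E d Own \<sigma>0"
  shows "valid1 E d Own (mv \<sigma>0, gr \<sigma>0)"
  unfolding valid1_def
proof (intro allI impI, intro conjI)
  fix h and v :: 'v and P :: "nat set" and r :: nat
  assume h: "h \<noteq> []" "last h = (v, P, r)"
  show "p1_moves Own P v \<longrightarrow> (v, fst (mv \<sigma>0, gr \<sigma>0) h) \<in> E"
  proof
    assume p: "p1_moves Own P v"
    show "(v, fst (mv \<sigma>0, gr \<sigma>0) h) \<in> E"
    proof (cases "\<exists>u. (v, u) \<in> E \<and> good (Aof h) u P r")
      case True
      then show ?thesis using someI_ex[OF True] p h by (simp add: mv_def)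
    next
      case False
      then have "mv \<sigma>0 h = fst \<sigma>0 h" using h by (auto simp: mv_def)
      then show ?thesis using assms h p by (simp add: valid1_def)
    qed
  qed
  show "\<forall>u j. snd (mv \<sigma>0, gr \<sigma>0) h u = Some j \<longrightarrow> 0 < r \<and> j \<in> {1..d} \<and> j \<notin> P"
  proof (intro allI impI)
    fix u j assume g: "snd (mv \<sigma>0, gr \<sigma>0) h u = Some j"
    show "0 < r \<and> j \<in> {1..d} \<and> j \<notin> P"
    proof (cases "(u, P, r) \<in> Aof h")
      case True then show ?thesis using g h by (simp add: gr_def)
    next
      case F: False
      show ?thesis
      proof (cases "\<exists>j. 0 < r \<and> j \<in> {1..d} \<and> j \<notin> P \<and> (u, insert j P, r - 1) \<in> Aof h")
        case True
        have "gr \<sigma>0 h u = Some (SOME j. 0 < r \<and> j \<in> {1..d} \<and> j \<notin> P \<and> (u, insert j P, r - 1) \<in> Aof h)"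
          using True h F by (simp add: gr_def)
        then have jeq: "(SOME j. 0 < r \<and> j \<in> {1..d} \<and> j \<notin> P \<and> (u, insert j P, r - 1) \<in> Aof h) = j"
          using g by simp
        have "0 < r \<and> j \<in> {1..d} \<and> j \<notin> P \<and> (u, insert j P, r - 1) \<in> Aof h"
          using someI_ex[OF True] unfolding jeq .
        then show ?thesis by blast
      next
        case False
        then have "gr \<sigma>0 h u = snd \<sigma>0 h u" using h F by (auto simp: gr_def)
        then have "snd \<sigma>0 h u = Some j" using g by simp
        then show ?thesis using h assms unfolding valid1_def by blast
      qed
    qed
  qed
qed

lemma next_in:
  assumes t: "valid2 E Own \<tau>" and h: "h \<noteq> []" "last h = c" and c: "c \<in> attr (Suc n)" "c \<notin> attr 0"
  shows "next_config Own (mv \<sigma>0, gr \<sigma>0) \<tau> h \<in> attr n"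
proof -
  obtain v P r where cv: "c = (v, P, r)" by (cases c) auto
  have rc: "c \<in> attr (rank c)" unfolding rank_def by (rule LeastI[of _ "Suc n"]) (rule c)
  have rle: "rank c \<le> Suc n" unfolding rank_def by (rule Least_le) (rule c)
  have r0: "rank c \<noteq> 0" using rc c(2) by metis
  then obtain m where m: "rank c = Suc m" by (cases "rank c") auto
  have nm: "c \<notin> attr m" unfolding rank_def
    by (rule not_less_Least) (use m in \<open>simp add: rank_def\<close>)
  have st: "stepc (attr m) v P r" using rc m nm cv by auto
  have A: "Aof h = attr m" unfolding Aof_def using h m by simp
  define u where "u = (if p1_moves Own P v then mv \<sigma>0 h else \<tau> h)"
  have gu: "good (attr m) u P r"
  proof (cases "p1_moves Own P v")
    case True
    then have ex: "\<exists>u. (v, u) \<in> E \<and> good (Aof h) u P r" using st A by (simp add: stepc_def)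
    have "mv \<sigma>0 h = (SOME u. (v, u) \<in> E \<and> good (Aof h) u P r)"
      using ex True h cv by (simp add: mv_def)
    then show ?thesis using someI_ex[OF ex] True A by (simp add: u_def)
  next
    case False
    then have "(v, \<tau> h) \<in> E" using t h cv by (simp add: valid2_def)
    then show ?thesis using st False by (simp add: stepc_def u_def)
  qed
  have nc: "next_config Own (mv \<sigma>0, gr \<sigma>0) \<tau> h =
      (case gr \<sigma>0 h u of None \<Rightarrow> (u, P, r) | Some j \<Rightarrow> (u, insert j P, r - 1))"
  proof -
    have fm: "fst (mv \<sigma>0, gr \<sigma>0) h = mv \<sigma>0 h" "snd (mv \<sigma>0, gr \<sigma>0) h = gr \<sigma>0 h" by simp_all
    show ?thesis unfolding next_config_def u_def fm using h cv by (auto simp: Let_def)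
  qed
  have "next_config Own (mv \<sigma>0, gr \<sigma>0) \<tau> h \<in> attr m"
  proof (cases "(u, P, r) \<in> attr m")
    case True
    then show ?thesis using nc h cv A by (simp add: gr_def)
  next
    case False
    then have ex: "\<exists>j. 0 < r \<and> j \<in> {1..d} \<and> j \<notin> P \<and> (u, insert j P, r - 1) \<in> Aof h"
      using gu A by (simp add: good_def)
    define j where "j = (SOME j. 0 < r \<and> j \<in> {1..d} \<and> j \<notin> P \<and> (u, insert j P, r - 1) \<in> Aof h)"
    have jp: "0 < r \<and> j \<in> {1..d} \<and> j \<notin> P \<and> (u, insert j P, r - 1) \<in> Aof h"
      unfolding j_def by (rule someI_ex[OF ex])
    have gd: "gr \<sigma>0 h u = (if (u, P, r) \<in> Aof h then None else if (\<exists>j. 0 < r \<and> j \<in> {1..d} \<and> j \<notin> P \<and> (u, insert j P, r - 1) \<in> Aof h) then Some j else snd \<sigma>0 h u)"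
      unfolding gr_def j_def using h cv by simp
    have "(u, P, r) \<notin> Aof h" using False A by simp
    then have "gr \<sigma>0 h u = Some j" unfolding gd using ex by simp
    then show ?thesis using nc jp A by simp
  qed
  then show ?thesis using attr_mono[of m n] m rle by auto
qed

lemma hist_ne: "hist Own \<sigma> \<tau> c n \<noteq> []"
  by (cases n) (auto simp: Let_def)

lemma play_Suc: "play Own \<sigma> \<tau> c (Suc n) = next_config Own \<sigma> \<tau> (hist Own \<sigma> \<tau> c n)"
  by (simp add: play_def Let_def)

lemma reach:
  assumes t: "valid2 E Own \<tau>"
  shows "play Own (mv \<sigma>0, gr \<sigma>0) \<tau> c0 t \<in> attr n \<Longrightarrow>
    \<exists>i\<le>n. fst (play Own (mv \<sigma>0, gr \<sigma>0) \<tau> c0 (t + i)) \<in> T"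
proof (induction n arbitrary: t)
  case 0 then show ?case by auto
next
  case (Suc n)
  show ?case
  proof (cases "play Own (mv \<sigma>0, gr \<sigma>0) \<tau> c0 t \<in> attr 0")
    case True then show ?thesis by force
  next
    case False
    have "play Own (mv \<sigma>0, gr \<sigma>0) \<tau> c0 (Suc t) \<in> attr n"
      unfolding play_Suc
      by (rule next_in[OF t hist_ne _ Suc.prems False]) (simp add: play_def)
    then obtain i where "i \<le> n" "fst (play Own (mv \<sigma>0, gr \<sigma>0) \<tau> c0 (Suc t + i)) \<in> T"
      using Suc.IH by blast
    then show ?thesis by (intro exI[of _ "Suc i"]) auto
  qed
qed

end


context pg
begin

lemma good_W: "good W u P r \<Longrightarrow> good (attr (card V * Suc r)) u P r"
proof -
  assume g: "good W u P r"
  have "(u, P', r - 1) \<in> attr (card V * Suc r)" if "(u, P', r - 1) \<in> W" "0 < r" for P'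
  proof -
    have "(u, P', r - 1) \<in> attr (card V * Suc (r - 1))" using stabW that(1) .
    moreover have "card V * Suc (r - 1) \<le> card V * Suc r" by simp
    ultimately show ?thesis using attr_mono by blast
  qed
  then show ?thesis using g stabW unfolding good_def by blast
qed

lemma W_closed: "stepc W v P r \<Longrightarrow> (v, P, r) \<in> W"
proof -
  assume "stepc W v P r"
  then have "stepc (attr (card V * Suc r)) v P r"
    unfolding stepc_def using good_W by (auto split: if_splits)
  then have "(v, P, r) \<in> attr (Suc (card V * Suc r))" by simp
  then show ?thesis unfolding W_def by blast
qed

definition tr :: "'v strat2 \<Rightarrow> 'v strat2" where
  "tr \<tau>0 h = (case last h of (v, P, r) \<Rightarrow>
     if \<exists>u. (v, u) \<in> E \<and> \<not> good W u P r then SOME u. (v, u) \<in> E \<and> \<not> good W u P r else \<tau>0 h)"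

lemma valid_tr: "valid2 E Own \<tau>0 \<Longrightarrow> valid2 E Own (tr \<tau>0)"
  unfolding valid2_def
proof (intro allI impI)
  fix h and v :: 'v and P :: "nat set" and r :: nat
  assume a: "\<forall>h v P r. h \<noteq> [] \<longrightarrow> last h = (v, P, r) \<longrightarrow> \<not> p1_moves Own P v \<longrightarrow> (v, \<tau>0 h) \<in> E"
    and h: "h \<noteq> []" "last h = (v, P, r)" and p: "\<not> p1_moves Own P v"
  show "(v, tr \<tau>0 h) \<in> E"
  proof (cases "\<exists>u. (v, u) \<in> E \<and> \<not> good W u P r")
    case True
    then show ?thesis using someI_ex[OF True] h by (simp add: tr_def)
  next
    case False
    then have "tr \<tau>0 h = \<tau>0 h" using h by (auto simp: tr_def)
    then show ?thesis using a h p by simp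
  qed
qed

lemma avoid:
  assumes s: "valid1 E d Own \<sigma>0" and t: "valid2 E Own \<tau>0" and c0: "c0 \<notin> W"
  shows "play Own \<sigma>0 (tr \<tau>0) c0 n \<notin> W"
proof (induction n)
  case 0 then show ?case using c0 by (simp add: play_def)
next
  case (Suc n)
  define h where "h = hist Own \<sigma>0 (tr \<tau>0) c0 n"
  obtain v P r where cv: "last h = (v, P, r)" by (cases "last h") auto
  have hne: "h \<noteq> []" unfolding h_def by (rule hist_ne)
  have cW: "(v, P, r) \<notin> W" using Suc.IH cv unfolding h_def play_def by simp
  define u where "u = (if p1_moves Own P v then fst \<sigma>0 h else tr \<tau>0 h)"
  have gu: "(v, u) \<in> E \<and> \<not> good W u P r"
  proof (cases "p1_moves Own P v")
    case True
    then have e: "(v, u) \<in> E" using s hne cv by (simp add: valid1_def u_def)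
    then have "v \<in> V" using EV by auto
    have "\<not> good W u P r"
    proof
      assume "good W u P r"
      then have "stepc W v P r" using True e \<open>v \<in> V\<close> by (auto simp: stepc_def)
      then show False using W_closed cW by blast
    qed
    then show ?thesis using e by simp
  next
    case False
    show ?thesis
    proof (cases "\<exists>u. (v, u) \<in> E \<and> \<not> good W u P r")
      case True
      then show ?thesis using someI_ex[OF True] False hne cv by (simp add: tr_def u_def)
    next
      case nex: False
      have "(v, \<tau>0 h) \<in> E" using t hne cv False by (simp add: valid2_def)
      then have "v \<in> V" using EV by auto
      then have "stepc W v P r" using nex False by (auto simp: stepc_def)
      then show ?thesis using W_closed cW by blast
    qed
  qed
  have nc: "next_config Own \<sigma>0 (tr \<tau>0) h =
      (case snd \<sigma>0 h u of None \<Rightarrow> (u, P, r) | Some j \<Rightarrow> (u, insert j P, r - 1))"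
    unfolding next_config_def u_def using cv by (auto simp: Let_def)
  have "next_config Own \<sigma>0 (tr \<tau>0) h \<notin> W"
  proof (cases "snd \<sigma>0 h u")
    case None
    then show ?thesis using nc gu by (simp add: good_def)
  next
    case (Some j)
    then have "0 < r \<and> j \<in> {1..d} \<and> j \<notin> P" using s hne cv unfolding valid1_def by blast
    then show ?thesis using nc gu Some unfolding good_def by auto
  qed
  then show ?case unfolding h_def play_Suc .
qed

end

theorem lemma34:
  fixes V :: "'v set" and E :: "('v \<times> 'v) set" and T :: "'v set"
    and d k :: nat and Own :: "nat \<Rightarrow> 'v set" and v0 :: 'v and P0 :: "nat set"
  assumes "pawn_game V E T d Own"
    and "v0 \<in> V" and "P0 \<subseteq> {1..d}"
    and "p1_wins E T d Own (v0, P0, k)"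
  shows "\<exists>\<sigma>. valid1 E d Own \<sigma> \<and>
           (\<forall>\<tau>. valid2 E Own \<tau> \<longrightarrow>
              (\<exists>n \<le> card V * (k + 1). fst (play Own \<sigma> \<tau> (v0, P0, k) n) \<in> T))"
proof -
  interpret pg V E T d Own by unfold_locales (rule assms(1))
  obtain \<sigma>0 where s0: "valid1 E d Own \<sigma>0"
    and w0: "\<And>\<tau>. valid2 E Own \<tau> \<Longrightarrow> \<exists>n. fst (play Own \<sigma>0 \<tau> (v0, P0, k) n) \<in> T"
    using assms(4) unfolding p1_wins_def by blast
  show ?thesis
  proof (cases "\<exists>\<tau>0. valid2 E Own \<tau>0")
    case False
    then show ?thesis using s0 by blast
  next
    case True
    then obtain \<tau>0 where t0: "valid2 E Own \<tau>0" by blast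
    have cW: "(v0, P0, k) \<in> W"
    proof (rule ccontr)
      assume nW: "(v0, P0, k) \<notin> W"
      obtain n where "fst (play Own \<sigma>0 (tr \<tau>0) (v0, P0, k) n) \<in> T"
        using w0[OF valid_tr[OF t0]] by blast
      then have "play Own \<sigma>0 (tr \<tau>0) (v0, P0, k) n \<in> attr 0" by simp
      then have "play Own \<sigma>0 (tr \<tau>0) (v0, P0, k) n \<in> W" unfolding W_def by blast
      then show False using avoid[OF s0 t0 nW] by blast
    qed
    then have cA: "(v0, P0, k) \<in> attr (card V * (k + 1))" using stabW by simp
    show ?thesis
    proof (rule exI[of _ "(mv \<sigma>0, gr \<sigma>0)"], intro conjI allI impI)
      show "valid1 E d Own (mv \<sigma>0, gr \<sigma>0)" by (rule valid_new[OF s0])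
      fix \<tau> assume t: "valid2 E Own \<tau>"
      have "play Own (mv \<sigma>0, gr \<sigma>0) \<tau> (v0, P0, k) 0 \<in> attr (card V * (k + 1))"
        using cA by (simp add: play_def)
      from reach[OF t this] show "\<exists>n \<le> card V * (k + 1). fst (play Own (mv \<sigma>0, gr \<sigma>0) \<tau> (v0, P0, k) n) \<in> T"
        by simp
    qed
  qed
qed


end
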